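(* Let $m,d\geq 1$ and let $f:(0,\infty)^m\times\mathbb{R}^d\to\mathbb{R}$, $f=f(t,x)$ with $t=(t^1,\dots,t^m)$, $x=(x^1,\dots,x^d)$, satisfy $f(t,0)=0$, have continuous first-order partial derivatives with respect to each $t^\alpha$ and continuous second-order partial derivatives with respect to the $x^a$. Suppose $f$ is a solution of the forward diffusion-like PDE system $$\frac{\partial f}{\partial t^\alpha}(t,x)-\frac12\,c_\alpha(t)\,\Delta_x f(t,x)=0,\qquad \alpha=1,\dots,m.$$ Then $f$ depends on the point $t=(t^1,\dots,t^m)$ only through the product $v=t^1\cdots t^m$, i.e. there is a function $\varphi$ with $f(t,x)=\varphi(t^1\cdots t^m,x)$; thus $f$ is a function of the volume $v$ of the box $\Omega_{0t}=\prod_{\alpha}[0,t^\alpha]$.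
   Context: Here $c_\alpha(t)=\frac{\partial v}{\partial t^\alpha}=\prod_{\beta\neq\alpha}t^\beta$ where $v=t^1\cdots t^m$, and $\Delta_x f=\sum_{a,b=1}^d\delta^{ab}\frac{\partial^2 f}{\partial x^a\partial x^b}=\sum_{a=1}^d\frac{\partial^2 f}{(\partial x^a)^2}$. *)

theory Defs
  imports "HOL-Analysis.Analysis"
begin

definition vupd :: "real^'n \<Rightarrow> 'n \<Rightarrow> real \<Rightarrow> real^'n" where
  "vupd v i s = (\<chi> j. if j = i then s else v $ j)"

definition cfun :: "'m::finite \<Rightarrow> real^'m \<Rightarrow> real" where
  "cfun \<alpha> t = (\<Prod>\<beta>\<in>UNIV - {\<alpha>}. t $ \<beta>)"

definition posorth :: "(real^'m) set" where
  "posorth = {t. \<forall>i. 0 < t $ i}"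

end

theory Submission
  imports Defs
begin

lemma vupd_nth[simp]: "vupd v i s $ j = (if j = i then s else v $ j)"
  by (simp add: vupd_def)

lemma vupd_same[simp]: "vupd (vupd v i a) i b = vupd v i b"
  by (simp add: vec_eq_iff)

lemma vupd_id[simp]: "vupd v i (v $ i) = v"
  by (simp add: vec_eq_iff)

lemma vupd_comm: "\<alpha> \<noteq> \<beta> \<Longrightarrow> vupd (vupd (vupd t \<alpha> u) \<beta> w) \<alpha> s = vupd (vupd t \<alpha> s) \<beta> w"
  by (simp add: vec_eq_iff)

lemma prod_split2:
  fixes T :: "real^'m"
  assumes "\<alpha> \<noteq> \<beta>"
  shows "(\<Prod>i\<in>UNIV - {\<alpha>}. T$i) = T$\<beta> * (\<Prod>i\<in>UNIV-{\<alpha>,\<beta>}. T$i)"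
proof -
  have "(\<Prod>i\<in>UNIV - {\<alpha>}. T$i) = T$\<beta> * (\<Prod>i\<in>UNIV-{\<alpha>}-{\<beta>}. T$i)"
    using assms by (intro prod.remove) auto
  moreover have "UNIV-{\<alpha>}-{\<beta>} = UNIV-{\<alpha>,\<beta>}" by auto
  ultimately show ?thesis by simp
qed

lemma prod_split1:
  fixes T :: "real^'m"
  shows "(\<Prod>i\<in>UNIV. T$i) = T$\<alpha> * (\<Prod>i\<in>UNIV - {\<alpha>}. T$i)"
  by (intro prod.remove) auto

lemma cont_P:
  fixes t :: "real^'m"
  shows "continuous_on S (\<lambda>(a::real, b::real). vupd (vupd t \<alpha> a) \<beta> b)"
proof -
  have "continuous_on S (\<lambda>p. \<chi> j. (if j = \<beta> then snd p else if j = \<alpha> then fst p else t $ j))"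
    apply (intro continuous_on_vec_lambda)
    subgoal for j by (cases "j=\<beta>"; cases "j=\<alpha>") (auto intro!: continuous_intros)
    done
  moreover have "(\<lambda>(a::real, b::real). vupd (vupd t \<alpha> a) \<beta> b) = (\<lambda>p. \<chi> j. (if j = \<beta> then snd p else if j = \<alpha> then fst p else t $ j))"
    by (auto simp: vec_eq_iff)
  ultimately show ?thesis by simp
qed

lemma move:
  fixes f :: "real^'m \<Rightarrow> real^'d \<Rightarrow> real"
    and Dt :: "'m \<Rightarrow> real^'m \<Rightarrow> real^'d \<Rightarrow> real"
  assumes dt: "\<And>\<alpha> t x. t \<in> posorth \<Longrightarrow>
               ((\<lambda>s. f (vupd t \<alpha> s) x) has_real_derivative Dt \<alpha> t x) (at (t $ \<alpha>))"
    and dt_cont: "\<And>\<alpha>. continuous_on (posorth \<times> UNIV) (\<lambda>(t, x). Dt \<alpha> t x)"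
    and pde: "\<And>\<alpha> t x. t \<in> posorth \<Longrightarrow>
               Dt \<alpha> t x = 1/2 * cfun \<alpha> t * L t x"
    and t: "t \<in> posorth" and ab: "\<alpha> \<noteq> \<beta>" and u0: "u0 > 0" and w0: "w0 > 0"
    and uw: "u0 * w0 = t$\<alpha> * t$\<beta>"
  shows "f (vupd (vupd t \<alpha> u0) \<beta> w0) x = f t x"
proof -
  define K where "K = t$\<alpha> * t$\<beta>"
  have tpos: "\<And>i. t$i > 0" using t by (simp add: posorth_def)
  have K: "K > 0" using tpos unfolding K_def by simp
  define P where "P = (\<lambda>a b. vupd (vupd t \<alpha> a) \<beta> b)"
  have Ppos: "P a b \<in> posorth" if "a > 0" "b > 0" for a b
    using that tpos by (auto simp: posorth_def P_def)
  define H where "H = (\<lambda>a. f (P a (K/a)) x)"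
  have "(H has_field_derivative 0) (at u within {0<..})" if u: "u > 0" for u
  proof -
    define w where "w = K/u"
    have w: "w > 0" using K u by (simp add: w_def)
    define T where "T = P u w"
    have T: "T \<in> posorth" using Ppos u w by (simp add: T_def)
    let ?X = "{0<..} :: real set"
    have G: "((\<lambda>(a, b). f (P a b) x) has_derivative
        (\<lambda>(ta, tb). Dt \<alpha> T x * ta + blinfun_apply (blinfun_mult_right (Dt \<beta> (P u w) x)) tb))
         (at (u, w) within ?X \<times> ?X)"
    proof (rule has_derivative_partialsI[where f = "\<lambda>a b. f (P a b) x"])
      have "((\<lambda>s. f (vupd T \<alpha> s) x) has_real_derivative Dt \<alpha> T x) (at (T $ \<alpha>))"
        using dt[OF T] .
      moreover have "\<And>s. vupd T \<alpha> s = P s w" using ab by (simp add: T_def P_def vupd_comm)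
      moreover have "T $ \<alpha> = u" using ab by (simp add: T_def P_def)
      ultimately have "((\<lambda>s. f (P s w) x) has_real_derivative Dt \<alpha> T x) (at u)" by simp
      then show "((\<lambda>a. f (P a w) x) has_derivative (*) (Dt \<alpha> T x)) (at u within ?X)"
        unfolding has_field_derivative_def by (rule has_derivative_at_withinI)
    next
      fix a b :: real assume a: "a \<in> ?X" and b: "b \<in> ?X"
      have PP: "P a b \<in> posorth" using a b Ppos by simp
      have "((\<lambda>s. f (vupd (P a b) \<beta> s) x) has_real_derivative Dt \<beta> (P a b) x) (at (P a b $ \<beta>))"
        using dt[OF PP] .
      moreover have "\<And>s. vupd (P a b) \<beta> s = P a s" by (simp add: P_def)
      moreover have "P a b $ \<beta> = b" by (simp add: P_def)
      ultimately have "((\<lambda>s. f (P a s) x) has_real_derivative Dt \<beta> (P a b) x) (at b)" by simp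
      then show "((\<lambda>s. f (P a s) x) has_derivative blinfun_apply (blinfun_mult_right (Dt \<beta> (P a b) x))) (at b within ?X)"
        unfolding has_field_derivative_def by (auto intro: has_derivative_at_withinI)
    next
      have c1: "continuous_on (?X \<times> ?X) (\<lambda>(a, b). Dt \<beta> (P a b) x)"
      proof -
        have "continuous_on (?X \<times> ?X) ((\<lambda>(t, x). Dt \<beta> t x) \<circ> (\<lambda>(a, b). (P a b, x)))"
        proof (rule continuous_on_compose)
          have "continuous_on (?X \<times> ?X) (\<lambda>(a::real, b::real). P a b)"
            unfolding P_def by (rule cont_P)
          then show "continuous_on (?X \<times> ?X) (\<lambda>(a, b). (P a b, x))"
            by (auto intro!: continuous_intros simp: split_beta)
          show "continuous_on ((\<lambda>(a, b). (P a b, x)) ` (?X \<times> ?X)) (\<lambda>(t, x). Dt \<beta> t x)"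
            by (rule continuous_on_subset[OF dt_cont]) (auto intro: Ppos)
        qed
        then show ?thesis by (simp add: o_def split_beta)
      qed
      have c2: "continuous_on (?X \<times> ?X) (\<lambda>(a, b). blinfun_mult_right (Dt \<beta> (P a b) x))"
        using continuous_on_compose[OF c1 linear_continuous_on[OF bounded_linear_blinfun_mult_right]]
        by (simp add: o_def split_beta)
      show "continuous (at (u, w) within ?X \<times> ?X) (\<lambda>(a, b). blinfun_mult_right (Dt \<beta> (P a b) x))"
        using c2 u w by (simp add: continuous_on_eq_continuous_within)
    qed (use w in auto)
    have G': "((\<lambda>(a, b). f (P a b) x) has_derivative
        (\<lambda>(ta, tb). Dt \<alpha> T x * ta + Dt \<beta> T x * tb)) (at (u, w))"
      using G at_within_open[of "(u,w)" "?X \<times> ?X"] u w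
      by (simp add: T_def open_Times)
    have C: "((\<lambda>a. (a, K/a)) has_derivative (\<lambda>h. (h, - (K / u^2) * h))) (at u within ?X)"
    proof -
      have "((\<lambda>a. K/a) has_real_derivative - (K / u^2)) (at u)"
        using u by (auto intro!: derivative_eq_intros simp: power2_eq_square field_simps)
      then have "((\<lambda>a. K/a) has_derivative (*) (- (K / u^2))) (at u within ?X)"
        unfolding has_field_derivative_def by (rule has_derivative_at_withinI)
      from has_derivative_Pair[OF has_derivative_ident this] show ?thesis by simp
    qed
    have comp: "((\<lambda>a. (\<lambda>(a, b). f (P a b) x) (a, K/a)) has_derivative
        (\<lambda>h. (\<lambda>(ta, tb). Dt \<alpha> T x * ta + Dt \<beta> T x * tb) (h, - (K / u^2) * h))) (at u within ?X)"
      using has_derivative_compose[OF C G'[unfolded w_def]] .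
    have Tb: "T$\<beta> = w" and Ta: "T$\<alpha> = u" using ab by (auto simp: T_def P_def)
    have ca: "cfun \<alpha> T = w * (\<Prod>i\<in>UNIV-{\<alpha>,\<beta>}. T$i)"
      using prod_split2[OF ab, of T] Tb by (simp add: cfun_def)
    have cb: "cfun \<beta> T = u * (\<Prod>i\<in>UNIV-{\<alpha>,\<beta>}. T$i)"
      using prod_split2[of \<beta> \<alpha> T] ab Ta by (simp add: cfun_def insert_commute)
    have zero: "Dt \<alpha> T x * h + Dt \<beta> T x * (- (K / u^2) * h) = 0 * h" for h
      using u unfolding pde[OF T] ca cb w_def by (simp add: field_simps power2_eq_square)
    have eqf: "(\<lambda>h. Dt \<alpha> T x * h + Dt \<beta> T x * (- (K / u^2) * h)) = (*) 0"
      by (rule ext) (rule zero)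
    show ?thesis using comp unfolding has_field_derivative_def H_def prod.case eqf .
  qed
  then obtain c where c: "\<And>a. a \<in> {0<..} \<Longrightarrow> H a = c"
    using has_field_derivative_zero_constant[of "{0<..}" H] by auto
  have "H u0 = f (vupd (vupd t \<alpha> u0) \<beta> w0) x"
  proof -
    have "K/u0 = w0" using u0 uw by (simp add: K_def field_simps)
    then show ?thesis by (simp add: H_def P_def)
  qed
  moreover have "H (t$\<alpha>) = f t x"
    using tpos[of \<alpha>] ab by (simp add: H_def P_def K_def vec_eq_iff)
  ultimately show ?thesis using c[of u0] c[of "t$\<alpha>"] u0 tpos[of \<alpha>] by simp
qed

theorem mainTheorem1:
  fixes f :: "real^'m \<Rightarrow> real^'d \<Rightarrow> real"
    and Dt :: "'m \<Rightarrow> real^'m \<Rightarrow> real^'d \<Rightarrow> real"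
    and Dx :: "'d \<Rightarrow> real^'m \<Rightarrow> real^'d \<Rightarrow> real"
    and Dxx :: "'d \<Rightarrow> 'd \<Rightarrow> real^'m \<Rightarrow> real^'d \<Rightarrow> real"
  assumes zero: "\<And>t. t \<in> posorth \<Longrightarrow> f t 0 = 0"
    and dt: "\<And>\<alpha> t x. t \<in> posorth \<Longrightarrow>
               ((\<lambda>s. f (vupd t \<alpha> s) x) has_real_derivative Dt \<alpha> t x) (at (t $ \<alpha>))"
    and dt_cont: "\<And>\<alpha>. continuous_on (posorth \<times> UNIV) (\<lambda>(t, x). Dt \<alpha> t x)"
    and dx: "\<And>a t x. t \<in> posorth \<Longrightarrow>
               ((\<lambda>s. f t (vupd x a s)) has_real_derivative Dx a t x) (at (x $ a))"
    and dxx: "\<And>a b t x. t \<in> posorth \<Longrightarrow>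
               ((\<lambda>s. Dx a t (vupd x b s)) has_real_derivative Dxx a b t x) (at (x $ b))"
    and dxx_cont: "\<And>a b. continuous_on (posorth \<times> UNIV) (\<lambda>(t, x). Dxx a b t x)"
    and pde: "\<And>\<alpha> t x. t \<in> posorth \<Longrightarrow>
               Dt \<alpha> t x - 1/2 * cfun \<alpha> t * (\<Sum>a\<in>UNIV. Dxx a a t x) = 0"
  shows "\<exists>\<phi> :: real \<Rightarrow> real^'d \<Rightarrow> real.
           \<forall>t \<in> posorth. \<forall>x. f t x = \<phi> (\<Prod>\<alpha>\<in>UNIV. t $ \<alpha>) x"
proof -
  obtain \<alpha>0 :: 'm where True by simp
  define L where "L = (\<lambda>t x. \<Sum>a\<in>UNIV. Dxx a a t x)"
  have pde': "Dt \<alpha> t x = 1/2 * cfun \<alpha> t * L t x" if "t \<in> posorth" for \<alpha> t x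
  proof -
    have "Dt \<alpha> t x - 1/2 * cfun \<alpha> t * L t x = 0" using pde[OF that] by (simp add: L_def)
    then show ?thesis by simp
  qed
  define e :: "real^'m" where "e = (\<chi> _. 1)"
  have key: "f t x = f (vupd e \<alpha>0 (\<Prod>\<alpha>\<in>UNIV. t$\<alpha>)) x" if "t \<in> posorth" for t x
  proof -
    have "\<forall>t. t \<in> posorth \<longrightarrow> card {i. i \<noteq> \<alpha>0 \<and> t$i \<noteq> 1} = n \<longrightarrow>
            f t x = f (vupd e \<alpha>0 (\<Prod>\<alpha>\<in>UNIV. t$\<alpha>)) x" for n
    proof (induction n rule: less_induct)
      case (less n)
      show ?case
      proof (intro allI impI)
        fix t :: "real^'m" assume t: "t \<in> posorth" and n: "card {i. i \<noteq> \<alpha>0 \<and> t$i \<noteq> 1} = n"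
        have tpos: "\<And>i. t$i > 0" using t by (simp add: posorth_def)
        show "f t x = f (vupd e \<alpha>0 (\<Prod>\<alpha>\<in>UNIV. t$\<alpha>)) x"
        proof (cases "\<exists>\<beta>. \<beta> \<noteq> \<alpha>0 \<and> t$\<beta> \<noteq> 1")
          case False
          have "(\<Prod>i\<in>UNIV - {\<alpha>0}. t$i) = 1" using False by (intro prod.neutral) auto
          then have "(\<Prod>\<alpha>\<in>UNIV. t$\<alpha>) = t$\<alpha>0" using prod_split1[of t \<alpha>0] by simp
          then have "vupd e \<alpha>0 (\<Prod>\<alpha>\<in>UNIV. t$\<alpha>) = t"
            using False by (auto simp: vec_eq_iff e_def)
          then show ?thesis by simp
        next
          case True
          then obtain \<beta> where b: "\<beta> \<noteq> \<alpha>0" "t$\<beta> \<noteq> 1" by auto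
          define t' where "t' = vupd (vupd t \<alpha>0 (t$\<alpha>0 * t$\<beta>)) \<beta> 1"
          have ft': "f t' x = f t x" unfolding t'_def
            by (rule move[where Dt = Dt and L = L, OF dt dt_cont pde' t]) (use b tpos in auto)
          have t': "t' \<in> posorth" using tpos by (auto simp: posorth_def t'_def)
          have R: "(\<Prod>i\<in>UNIV-{\<alpha>0,\<beta>}. t'$i) = (\<Prod>i\<in>UNIV-{\<alpha>0,\<beta>}. t$i)"
            by (rule prod.cong) (auto simp: t'_def)
          have pt: "(\<Prod>\<alpha>\<in>UNIV. t$\<alpha>) = t$\<alpha>0 * (t$\<beta> * (\<Prod>i\<in>UNIV-{\<alpha>0,\<beta>}. t$i))"
            using prod_split1[of t \<alpha>0] prod_split2[of \<alpha>0 \<beta> t] b by simp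
          have pt': "(\<Prod>\<alpha>\<in>UNIV. t'$\<alpha>) = t'$\<alpha>0 * (t'$\<beta> * (\<Prod>i\<in>UNIV-{\<alpha>0,\<beta>}. t'$i))"
            using prod_split1[of t' \<alpha>0] prod_split2[of \<alpha>0 \<beta> t'] b by simp
          have peq: "(\<Prod>\<alpha>\<in>UNIV. t'$\<alpha>) = (\<Prod>\<alpha>\<in>UNIV. t$\<alpha>)"
            unfolding pt pt' R using b by (simp add: t'_def)
          have seq: "{i. i \<noteq> \<alpha>0 \<and> t'$i \<noteq> 1} = {i. i \<noteq> \<alpha>0 \<and> t$i \<noteq> 1} - {\<beta>}"
            using b by (auto simp: t'_def)
          have "card {i. i \<noteq> \<alpha>0 \<and> t'$i \<noteq> 1} < n"
            unfolding seq n[symmetric] using b by (intro card_Diff1_less) auto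
          from less[rule_format, OF this t' refl] ft' peq show ?thesis by simp
        qed
      qed
    qed
    then show ?thesis using that by blast
  qed
  show ?thesis
    by (rule exI[where x = "\<lambda>v x. f (vupd e \<alpha>0 v) x"]) (use key in blast)
qed

end
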